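(* Let $t,\ell,m$ be integers with $1 \le t \le \ell \le m$ and $\ell m\ge 2$. Then the minimum distance of the dual code $\widehat{C}_{\det}(t;\ell,m)^{\perp}$ equals $3$.
   Context: $q$ is a prime power. Let $\widehat{\mathcal D}_t(\ell,m)\subset\mathbb{P}^{\ell m-1}(\mathbb{F}_q)=\mathbb{P}(\mathrm{Mat}_{\ell\times m}(\mathbb{F}_q))$ be the set of points $[M]$ with $M\ne 0$ and $\mathrm{rk}(M)\le t$; let $\hat n=|\widehat{\mathcal D}_t(\ell,m)|$, enumerate its points and choose representatives $M_1,\dots,M_{\hat n}$. The determinantal code $\widehat{C}_{\det}(t;\ell,m)\subseteq\mathbb{F}_q^{\hat n}$ is the set of vectors $(f(M_1),\dots,f(M_{\hat n}))$ for $f$ ranging over linear forms in the entries of an $\ell\times m$ matrix of indeterminates. The dual code is its orthogonal complement in $\mathbb{F}_q^{\hat n}$ with respect to the standard dot product. *)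

theory Defs
  imports "HOL-Analysis.Analysis"
begin

text \<open>Matrices of size l x m over a finite field 'a are elements of 'a^'m^'l
  (rows indexed by 'l, columns by 'm).  The rank is the library rank
  (Cartesian_Space) for matrices over an arbitrary field.\<close>

definition det_cone :: "nat \<Rightarrow> ('a::field ^'m^'l) set" where
  "det_cone t = {M. M \<noteq> 0 \<and> rank M \<le> t}"

text \<open>Ms is a list of representatives of the projective points of the
  determinantal variety: every entry is a nonzero matrix of rank at most t,
  and every nonzero matrix of rank at most t is a nonzero scalar multiple of
  exactly one entry of Ms (so the entries enumerate the projective points,
  each once).\<close>
definition proj_reps :: "nat \<Rightarrow> ('a::field ^'m^'l) list \<Rightarrow> bool" where
  "proj_reps t Ms \<longleftrightarrow>
     set Ms \<subseteq> det_cone t \<and>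
     (\<forall>M \<in> det_cone t. \<exists>!i. i < length Ms \<and>
         (\<exists>c. c \<noteq> 0 \<and> M = (\<chi> a b. c * (Ms ! i) $ a $ b)))"

definition lin_form :: "('a::comm_ring_1 ^'m^'l) \<Rightarrow> ('a ^'m^'l) \<Rightarrow> 'a" where
  "lin_form F M = (\<Sum>a\<in>UNIV. \<Sum>b\<in>UNIV. F $ a $ b * M $ a $ b)"

definition det_code :: "('a::comm_ring_1 ^'m^'l) list \<Rightarrow> 'a list set" where
  "det_code Ms = {map (lin_form F) Ms | F. True}"

definition dot_prod :: "'a::comm_ring_1 list \<Rightarrow> 'a list \<Rightarrow> 'a" where
  "dot_prod u v = sum_list (map2 (*) u v)"

definition dual_code :: "nat \<Rightarrow> 'a::comm_ring_1 list set \<Rightarrow> 'a list set" where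
  "dual_code n C = {v. length v = n \<and> (\<forall>c\<in>C. dot_prod v c = 0)}"

definition hamming_weight :: "'a::zero list \<Rightarrow> nat" where
  "hamming_weight v = length (filter (\<lambda>x. x \<noteq> 0) v)"

definition min_distance :: "nat \<Rightarrow> 'a::zero list set \<Rightarrow> nat" where
  "min_distance n C = Min {hamming_weight v | v. v \<in> C \<and> v \<noteq> replicate n 0}"

end

theory Submission
  imports Defs
begin

lemma dot_prod_nth:
  assumes "length u = length v"
  shows "dot_prod u v = (\<Sum>k<length u. u!k * v!k)"
  using assms unfolding dot_prod_def
  by (simp add: sum_list_sum_nth atLeast0LessThan)

lemma dual_iff:
  fixes Ms :: "('a::comm_ring_1 ^'m::finite ^'l::finite) list"
  shows "v \<in> dual_code (length Ms) (det_code Ms) \<longleftrightarrow>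
    length v = length Ms \<and> (\<forall>a b. (\<Sum>k<length Ms. v!k * Ms!k$a$b) = 0)"
proof -
  have key: "dot_prod v (map (lin_form F) Ms) =
     (\<Sum>a\<in>UNIV. \<Sum>b\<in>UNIV. F$a$b * (\<Sum>k<length Ms. v!k * Ms!k$a$b))"
    if "length v = length Ms" for F
  proof -
    have "dot_prod v (map (lin_form F) Ms) = (\<Sum>k<length Ms. v!k * lin_form F (Ms!k))"
      using that by (simp add: dot_prod_nth)
    also have "\<dots> = (\<Sum>k<length Ms. \<Sum>a\<in>UNIV. \<Sum>b\<in>UNIV. F$a$b * (v!k * Ms!k$a$b))"
      unfolding lin_form_def by (simp add: sum_distrib_left algebra_simps)
    also have "\<dots> = (\<Sum>a\<in>UNIV. \<Sum>b\<in>UNIV. \<Sum>k<length Ms. F$a$b * (v!k * Ms!k$a$b))"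
      by (simp add: sum.swap[of _ "{..<length Ms}"] sum.swap[of _ "{..<length Ms}" UNIV])
    also have "\<dots> = (\<Sum>a\<in>UNIV. \<Sum>b\<in>UNIV. F$a$b * (\<Sum>k<length Ms. v!k * Ms!k$a$b))"
      by (simp add: sum_distrib_left)
    finally show ?thesis .
  qed
  show ?thesis
  proof
    assume h: "v \<in> dual_code (length Ms) (det_code Ms)"
    hence len: "length v = length Ms" by (simp add: dual_code_def)
    show "length v = length Ms \<and> (\<forall>a b. (\<Sum>k<length Ms. v!k * Ms!k$a$b) = 0)"
    proof (intro conjI allI len)
      fix a b
      define F :: "'a ^'m ^'l" where "F = (\<chi> a' b'. if a' = a then (if b' = b then 1 else 0) else 0)"
      have "map (lin_form F) Ms \<in> det_code Ms" by (auto simp: det_code_def)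
      hence "dot_prod v (map (lin_form F) Ms) = 0" using h by (simp add: dual_code_def)
      hence "(\<Sum>a'\<in>UNIV. \<Sum>b'\<in>UNIV. F$a'$b' * (\<Sum>k<length Ms. v!k * Ms!k$a'$b')) = 0"
        using key[OF len] by simp
      moreover have "(\<Sum>a'\<in>UNIV. \<Sum>b'\<in>UNIV. F$a'$b' * (\<Sum>k<length Ms. v!k * Ms!k$a'$b'))
          = (\<Sum>k<length Ms. v!k * Ms!k$a$b)"
      proof -
        have "(\<Sum>b'\<in>UNIV. F$a'$b' * (\<Sum>k<length Ms. v!k * Ms!k$a'$b')) =
              (if a' = a then (\<Sum>k<length Ms. v!k * Ms!k$a$b) else 0)" for a'
        proof (cases "a' = a")
          case True
          have "(\<Sum>b'\<in>UNIV. F$a'$b' * (\<Sum>k<length Ms. v!k * Ms!k$a'$b')) =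
                (\<Sum>b'\<in>UNIV. if b' = b then (\<Sum>k<length Ms. v!k * Ms!k$a'$b') else 0)"
            by (rule sum.cong) (auto simp: F_def True)
          also have "\<dots> = (\<Sum>k<length Ms. v!k * Ms!k$a$b)" using True by simp
          finally show ?thesis using True by simp
        qed (simp add: F_def)
        thus ?thesis by simp
      qed
      ultimately show "(\<Sum>k<length Ms. v!k * Ms!k$a$b) = 0" by simp
    qed
  next
    assume h: "length v = length Ms \<and> (\<forall>a b. (\<Sum>k<length Ms. v!k * Ms!k$a$b) = 0)"
    show "v \<in> dual_code (length Ms) (det_code Ms)"
      unfolding dual_code_def det_code_def using h key by auto
  qed
qed


lemma weight_card:
  "hamming_weight v = card {k. k < length v \<and> v!k \<noteq> 0}"
  unfolding hamming_weight_def by (simp add: length_filter_conv_card)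

lemma rank_le_1:
  fixes A :: "'a::field ^'m::finite ^'l::finite"
  assumes "\<And>i. i \<noteq> a0 \<Longrightarrow> A$i = 0"
  shows "rank A \<le> 1"
proof -
  have "rows A \<subseteq> vec.span {row a0 A}"
  proof
    fix r assume "r \<in> rows A"
    then obtain i where r: "r = row i A" by (auto simp: rows_def)
    show "r \<in> vec.span {row a0 A}"
    proof (cases "i = a0")
      case True thus ?thesis using r by (simp add: vec.span_base)
    next
      case False
      hence "r = 0" using r assms by (simp add: row_def vec_eq_iff)
      thus ?thesis by (simp add: vec.span_zero)
    qed
  qed
  hence "vec.dim (rows A) \<le> card {row a0 A}" by (intro vec.dim_le_card) auto
  thus ?thesis by (simp add: row_rank_def_gen)
qed

lemma lower_bound:
  fixes Ms :: "('a::field ^'m::finite ^'l::finite) list"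
  assumes pr: "proj_reps t Ms"
    and v: "v \<in> dual_code (length Ms) (det_code Ms)" and nz: "v \<noteq> replicate (length Ms) 0"
  shows "3 \<le> hamming_weight v"
proof -
  define n where "n = length Ms"
  from v have len: "length v = n" and rel: "\<And>a b. (\<Sum>k<n. v!k * Ms!k$a$b) = 0"
    unfolding n_def by (auto simp: dual_iff)
  define S where "S = {k. k < n \<and> v!k \<noteq> 0}"
  have hw: "hamming_weight v = card S" unfolding S_def weight_card len ..
  have finS: "finite S" unfolding S_def by auto
  have Sne: "S \<noteq> {}"
  proof
    assume "S = {}"
    hence "\<And>k. k < n \<Longrightarrow> v!k = 0" unfolding S_def by auto
    hence "v = replicate n 0" using len by (intro nth_equalityI) auto
    thus False using nz n_def by simp
  qed
  have relS: "(\<Sum>k\<in>S. v!k * Ms!k$a$b) = 0" for a b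
  proof -
    have "(\<Sum>k\<in>S. v!k * Ms!k$a$b) = (\<Sum>k<n. v!k * Ms!k$a$b)"
      by (rule sum.mono_neutral_left) (auto simp: S_def)
    thus ?thesis using rel by simp
  qed
  have inC: "Ms!k \<in> det_cone t" if "k < n" for k
    using pr that unfolding proj_reps_def n_def by auto
  show ?thesis
  proof (rule ccontr)
    assume "\<not> 3 \<le> hamming_weight v"
    moreover have "card S \<noteq> 0" using finS Sne by simp
    ultimately have "card S = 1 \<or> card S = 2" using hw by linarith
    thus False
    proof
      assume "card S = 1"
      then obtain i where Si: "S = {i}" by (auto simp: card_Suc_eq)
      hence i: "i < n" "v!i \<noteq> 0" unfolding S_def by auto
      have "Ms!i = 0"
      proof (subst vec_eq_iff, intro allI, subst vec_eq_iff, intro allI)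
        fix a b show "Ms!i$a$b = 0$a$b" using relS[of a b] Si i by simp
      qed
      thus False using inC[OF i(1)] by (simp add: det_cone_def)
    next
      assume "card S = 2"
      then obtain i j where Sij: "S = {i,j}" and ij: "i \<noteq> j" by (auto simp: card_2_iff)
      hence i: "i < n" "v!i \<noteq> 0" and j: "j < n" "v!j \<noteq> 0" unfolding S_def by auto
      define c where "c = - v!j / v!i"
      have c0: "c \<noteq> 0" using i j by (simp add: c_def)
      have eq: "Ms!i = (\<chi> a b. c * Ms!j$a$b)"
      proof (subst vec_eq_iff, intro allI, subst vec_eq_iff, intro allI)
        fix a b
        have "v!i * Ms!i$a$b + v!j * Ms!j$a$b = 0" using relS[of a b] Sij ij by simp
        hence "v!i * Ms!i$a$b = - (v!j * Ms!j$a$b)" by (simp add: eq_neg_iff_add_eq_0)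
        hence "Ms!i$a$b = - (v!j * Ms!j$a$b) / v!i" using i(2) by (simp add: field_simps)
        thus "Ms!i$a$b = (\<chi> a b. c * Ms!j$a$b)$a$b" by (simp add: c_def)
      qed
      have "\<exists>!k. k < length Ms \<and> (\<exists>c. c \<noteq> 0 \<and> Ms!i = (\<chi> a b. c * (Ms ! k) $ a $ b))"
        using pr inC[OF i(1)] unfolding proj_reps_def by blast
      moreover have "i < length Ms \<and> (\<exists>c. c \<noteq> 0 \<and> Ms!i = (\<chi> a b. c * (Ms ! i) $ a $ b))"
        using i n_def by (auto intro!: exI[of _ 1] simp: vec_eq_iff)
      moreover have "j < length Ms \<and> (\<exists>c. c \<noteq> 0 \<and> Ms!i = (\<chi> a b. c * (Ms ! j) $ a $ b))"
        using j n_def c0 eq by auto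
      ultimately show False using ij by blast
    qed
  qed
qed


lemma sumdelta:
  fixes c :: "'a::comm_ring_1" and n :: nat
  shows "(\<Sum>k<n. (if k = i then c else 0) * f k) = (if i < n then c * f i else 0)"
proof -
  have "(\<Sum>k<n. (if k = i then c else 0) * f k) = (\<Sum>k<n. if k = i then c * f i else 0)"
    by (rule sum.cong) auto
  also have "\<dots> = (if i \<in> {..<n} then c * f i else 0)"
    by (rule sum.delta) simp
  finally show ?thesis by simp
qed

lemma upper_exists:
  fixes Ms :: "('a::field ^'m::finite ^'l::finite) list"
  assumes pr: "proj_reps t Ms" and t1: "1 \<le> t" and m2: "2 \<le> CARD('m)"
  shows "\<exists>v. v \<in> dual_code (length Ms) (det_code Ms) \<and> hamming_weight v = 3"
proof -
  obtain b1 b2 :: 'm where b12: "b1 \<noteq> b2"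
    using m2 by (metis card_2_iff' ex_card)
  obtain a0 :: 'l where True by simp
  define A :: "'a ^'m ^'l" where "A = (\<chi> a b. if a = a0 \<and> b = b1 then 1 else 0)"
  define B :: "'a ^'m ^'l" where "B = (\<chi> a b. if a = a0 \<and> b = b2 then 1 else 0)"
  define C :: "'a ^'m ^'l" where "C = A + B"
  have A1: "A$a0$b1 = 1" "A$a0$b2 = 0" using b12 by (auto simp: A_def)
  have B1: "B$a0$b1 = 0" "B$a0$b2 = 1" using b12 by (auto simp: B_def)
  have C1: "C$a0$b1 = 1" "C$a0$b2 = 1" using A1 B1 by (auto simp: C_def)
  have rA: "rank A \<le> 1" by (rule rank_le_1[of a0]) (auto simp: A_def vec_eq_iff)
  have rB: "rank B \<le> 1" by (rule rank_le_1[of a0]) (auto simp: B_def vec_eq_iff)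
  have rC: "rank C \<le> 1" by (rule rank_le_1[of a0]) (auto simp: C_def A_def B_def vec_eq_iff)
  have inA: "A \<in> det_cone t" using rA t1 A1 by (auto simp: det_cone_def)
  have inB: "B \<in> det_cone t" using rB t1 B1 by (auto simp: det_cone_def)
  have inC: "C \<in> det_cone t" using rC t1 C1 by (auto simp: det_cone_def)
  have ex: "\<exists>i c. i < length Ms \<and> c \<noteq> 0 \<and> M = (\<chi> a b. c * (Ms ! i) $ a $ b)"
    if "M \<in> det_cone t" for M
    using pr that unfolding proj_reps_def by blast
  obtain iA cA where iA: "iA < length Ms" "cA \<noteq> 0" "A = (\<chi> a b. cA * (Ms ! iA) $ a $ b)"
    using ex[OF inA] by blast
  obtain iB cB where iB: "iB < length Ms" "cB \<noteq> 0" "B = (\<chi> a b. cB * (Ms ! iB) $ a $ b)"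
    using ex[OF inB] by blast
  obtain iC cC where iC: "iC < length Ms" "cC \<noteq> 0" "C = (\<chi> a b. cC * (Ms ! iC) $ a $ b)"
    using ex[OF inC] by blast
  have eA: "A$a$b = cA * Ms!iA$a$b" for a b using iA(3) by simp
  have eB: "B$a$b = cB * Ms!iB$a$b" for a b using iB(3) by simp
  have eC: "C$a$b = cC * Ms!iC$a$b" for a b using iC(3) by simp
  have dAB: "iA \<noteq> iB"
  proof
    assume h: "iA = iB"
    have "cA * Ms!iA$a0$b1 = 1" using eA[of a0 b1] A1 by simp
    moreover have "cB * Ms!iA$a0$b1 = 0" using eB[of a0 b1] B1 h by simp
    ultimately show False using iB(2) by simp
  qed
  have dAC: "iA \<noteq> iC"
  proof
    assume h: "iA = iC"
    have "cA * Ms!iA$a0$b2 = 0" using eA[of a0 b2] A1 by simp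
    moreover have "cC * Ms!iA$a0$b2 = 1" using eC[of a0 b2] C1 h by simp
    ultimately show False using iA(2) by simp
  qed
  have dBC: "iB \<noteq> iC"
  proof
    assume h: "iB = iC"
    have "cB * Ms!iB$a0$b1 = 0" using eB[of a0 b1] B1 by simp
    moreover have "cC * Ms!iB$a0$b1 = 1" using eC[of a0 b1] C1 h by simp
    ultimately show False using iB(2) by simp
  qed
  define n where "n = length Ms"
  define g where "g k = (if k = iA then cA else 0) + (if k = iB then cB else 0) + (if k = iC then - cC else 0)" for k
  define v where "v = map g [0..<n]"
  have lv: "length v = n" by (simp add: v_def)
  have vk: "v!k = g k" if "k < n" for k using that by (simp add: v_def)
  have "(\<Sum>k<n. v!k * Ms!k$a$b) = 0" for a b
  proof -
    have "(\<Sum>k<n. v!k * Ms!k$a$b) = (\<Sum>k<n. g k * Ms!k$a$b)"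
      by (rule sum.cong) (auto simp: vk)
    also have "\<dots> = (\<Sum>k<n. (if k = iA then cA else 0) * Ms!k$a$b)
        + (\<Sum>k<n. (if k = iB then cB else 0) * Ms!k$a$b)
        + (\<Sum>k<n. (if k = iC then - cC else 0) * Ms!k$a$b)"
      by (simp add: g_def distrib_right sum.distrib)
    also have "\<dots> = cA * Ms!iA$a$b + cB * Ms!iB$a$b + (- cC) * Ms!iC$a$b"
      using iA(1) iB(1) iC(1) by (simp only: sumdelta n_def if_True)
    also have "\<dots> = cA * Ms!iA$a$b + cB * Ms!iB$a$b - cC * Ms!iC$a$b" by simp
    also have "\<dots> = A$a$b + B$a$b - C$a$b" by (simp add: eA eB eC)
    also have "\<dots> = 0" by (simp add: C_def)
    finally show ?thesis .
  qed
  hence vd: "v \<in> dual_code (length Ms) (det_code Ms)" using lv by (simp add: dual_iff n_def)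
  have "{k. k < length v \<and> v!k \<noteq> 0} = {iA, iB, iC}"
    using lv vk iA iB iC dAB dAC dBC by (auto simp: g_def n_def split: if_splits)
  hence "hamming_weight v = 3" using dAB dAC dBC by (simp add: weight_card)
  thus ?thesis using vd by blast
qed

theorem mainTheorem11:
  fixes t :: nat
    and Ms :: "('a::{field,finite} ^'m::finite ^'l::finite) list"
  assumes "1 \<le> t" and "t \<le> CARD('l)" and "CARD('l) \<le> CARD('m)"
    and "CARD('l) * CARD('m) \<ge> 2"
    and "proj_reps t Ms"
  shows "min_distance (length Ms) (dual_code (length Ms) (det_code Ms)) = 3"
proof -
  have m2: "2 \<le> CARD('m)"
  proof (rule ccontr)
    assume "\<not> 2 \<le> CARD('m)"
    hence "CARD('m) \<le> 1" by simp
    hence "CARD('l) \<le> 1" using assms(3) by simp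
    hence "CARD('l) * CARD('m) \<le> 1" using \<open>CARD('m) \<le> 1\<close>
      by (metis mult_le_mono nat_mult_1)
    thus False using assms(4) by simp
  qed
  obtain v where v: "v \<in> dual_code (length Ms) (det_code Ms)" "hamming_weight v = 3"
    using upper_exists[OF assms(5) assms(1) m2] by blast
  let ?W = "{hamming_weight v | v. v \<in> dual_code (length Ms) (det_code Ms) \<and> v \<noteq> replicate (length Ms) 0}"
  have vnz: "v \<noteq> replicate (length Ms) 0"
  proof
    assume "v = replicate (length Ms) 0"
    hence "hamming_weight v = 0" by (simp add: hamming_weight_def)
    thus False using v(2) by simp
  qed
  have in3: "3 \<in> ?W" unfolding mem_Collect_eq
    by (rule exI[of _ v]) (use v vnz in auto)
  have fin: "finite ?W"
  proof (rule finite_subset)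
    show "?W \<subseteq> {..length Ms}"
      by (auto simp: hamming_weight_def dual_code_def intro: order_trans[OF length_filter_le])
  qed simp
  show ?thesis unfolding min_distance_def
    by (rule Min_eqI[OF fin _ in3]) (auto intro: lower_bound[OF assms(5)])
qed

end
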